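(* For all integers $0<k \leq \ell < n$, the polynomial \[ \overline{ { n \brack k}}_{q,t} \overline{ { n \brack \ell }}_{q,t} - \overline{ { n-1 \brack k-1}}_{q,t} \overline{ { n+1 \brack \ell+1 }}_{q,t} \] has non-negative coefficients as a polynomial in $q$ and $t$.
   Context: An overpartition is a partition in which the last occurrence of each distinct part size may be overlined; its weight $|\lambda|$ is the sum of its parts. For integers $0\le b\le a$, $\overline{{a \brack b}}_{q,t}=\sum_{\lambda} t^{\#_o(\lambda)} q^{|\lambda|}$, the sum over all overpartitions $\lambda$ with largest part at most $a-b$ and at most $b$ parts, $\#_o(\lambda)$ being the number of overlined parts. *)

theory Defs
  imports "HOL-Library.Multiset" "HOL-Computational_Algebra.Polynomial"
begin

text \<open>An overpartition is represented as a pair (lam, S): lam is a multiset of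
positive parts (the underlying partition) and S is the set of distinct part sizes
whose last occurrence is overlined, so S is a subset of the set of part sizes.\<close>

definition overpartitions :: "nat \<Rightarrow> nat \<Rightarrow> (nat multiset \<times> nat set) set" where
  "overpartitions m b = {(lam, S). (\<forall>x\<in>#lam. 0 < x \<and> x \<le> m) \<and> size lam \<le> b
                                      \<and> S \<subseteq> set_mset lam}"

text \<open>Overpartition analogue of the Gaussian binomial, as a bivariate polynomial:
outer variable t, inner variable q (coefficient of t^j is a polynomial in q).\<close>

definition over_gauss :: "nat \<Rightarrow> nat \<Rightarrow> int poly poly" where
  "over_gauss a b = (\<Sum>(lam, S)\<in>overpartitions (a - b) b.
                         monom (monom 1 (sum_mset lam)) (card S))"

definition nonneg_coeffs2 :: "int poly poly \<Rightarrow> bool" where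
  "nonneg_coeffs2 P \<longleftrightarrow> (\<forall>i j. 0 \<le> coeff (coeff P i) j)"

end

theory Submission
  imports Defs
begin


definition nn1 :: "int poly \<Rightarrow> bool" where "nn1 p \<longleftrightarrow> (\<forall>j. 0 \<le> coeff p j)"

lemma nn1_mult: "nn1 p \<Longrightarrow> nn1 q \<Longrightarrow> nn1 (p * q)"
  unfolding nn1_def coeff_mult by (auto intro!: sum_nonneg)

lemma nn1_add: "nn1 p \<Longrightarrow> nn1 q \<Longrightarrow> nn1 (p + q)"
  unfolding nn1_def by (auto)

lemma nn1_sum: "(\<And>x. x \<in> A \<Longrightarrow> nn1 (f x)) \<Longrightarrow> nn1 (sum f A)"
  unfolding nn1_def by (auto simp: coeff_sum intro!: sum_nonneg)

lemma nn2_mult: "nonneg_coeffs2 p \<Longrightarrow> nonneg_coeffs2 q \<Longrightarrow> nonneg_coeffs2 (p * q)"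
  unfolding nonneg_coeffs2_def coeff_mult
  by (auto simp: coeff_sum intro!: sum_nonneg nn1_mult[unfolded nn1_def, rule_format])

lemma nn2_add: "nonneg_coeffs2 p \<Longrightarrow> nonneg_coeffs2 q \<Longrightarrow> nonneg_coeffs2 (p + q)"
  unfolding nonneg_coeffs2_def by (auto)

lemma nn2_sum: "(\<And>x. x \<in> A \<Longrightarrow> nonneg_coeffs2 (f x)) \<Longrightarrow> nonneg_coeffs2 (sum f A)"
  unfolding nonneg_coeffs2_def by (auto simp: coeff_sum intro!: sum_nonneg)

lemma nn2_0: "nonneg_coeffs2 0" and nn2_1: "nonneg_coeffs2 1"
  unfolding nonneg_coeffs2_def by (auto simp: coeff_1 of_bool_def)

lemma nn2_monom: "nonneg_coeffs2 (monom (monom 1 a) b)"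
  unfolding nonneg_coeffs2_def by (auto simp: coeff_monom)

definition Q :: "nat \<Rightarrow> int poly poly" where "Q j = monom (monom 1 j) 0"
definition T :: "int poly poly" where "T = monom 1 1"

lemma Q_add: "Q (a + b) = Q a * Q b"
  unfolding Q_def by (simp add: mult_monom)

lemma nn2_Q: "nonneg_coeffs2 (Q a)" unfolding Q_def by (rule nn2_monom)
lemma nn2_T: "nonneg_coeffs2 T" unfolding T_def using nn2_monom[of 0 1] by simp

lemma monom_split: "monom (monom 1 a) b = Q a * T ^ b"
  unfolding Q_def T_def by (simp add: mult_monom monom_0 monom_power smult_monom)



abbreviation OP where "OP \<equiv> overpartitions"
definition wgt :: "nat multiset \<times> nat set \<Rightarrow> int poly poly" where
  "wgt x = monom (monom 1 (sum_mset (fst x))) (card (snd x))"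

lemma OP_sub: "OP m b \<subseteq> (\<Union>s\<in>{..b}. multisets_of_size {0..m} s) \<times> Pow {0..m}"
  unfolding overpartitions_def multisets_of_size_def by auto

lemma finite_OP: "finite (OP m b)"
  by (rule finite_subset[OF OP_sub]) auto

lemma over_gauss_wgt: "over_gauss (m + b) b = (\<Sum>x\<in>OP m b. wgt x)"
  unfolding over_gauss_def wgt_def by (simp add: case_prod_beta)

lemma OP_0: "OP 0 b = {({#}, {})}"
  unfolding overpartitions_def by (auto simp: multiset_eq_iff) (metis count_eq_zero_iff less_irrefl)

definition R :: "nat \<Rightarrow> nat multiset \<Rightarrow> nat multiset" where
  "R a lam = filter_mset (\<lambda>x. x \<noteq> a) lam"

lemma R_split: "lam = R a lam + replicate_mset (count lam a) a"
  unfolding R_def by (metis (mono_tags) filter_eq_replicate_mset multiset_partition add.commute)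

lemma fiber0: "{x \<in> OP (Suc m) b. count (fst x) (Suc m) = 0} = OP m b"
  unfolding overpartitions_def
  by (auto simp: count_eq_zero_iff le_Suc_eq) fastforce

lemma sum_F0:
  assumes "c \<le> b"
  shows "(\<Sum>x\<in>{x \<in> OP (Suc m) b. count (fst x) (Suc m) = c} - {x. Suc m \<in> snd x}. wgt x)
       = (\<Sum>y\<in>OP m (b - c). Q (c * Suc m) * wgt y)"
proof (rule sum.reindex_bij_witness[where j = "\<lambda>(lam, S). (R (Suc m) lam, S)"
      and i = "\<lambda>(mu, S). (mu + replicate_mset c (Suc m), S)"])
  fix a assume a: "a \<in> {x \<in> OP (Suc m) b. count (fst x) (Suc m) = c} - {x. Suc m \<in> snd x}"
  obtain lam S where [simp]: "a = (lam, S)" by fastforce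
  from a have cnt: "count lam (Suc m) = c" by auto
  show "(\<lambda>(mu, S). (mu + replicate_mset c (Suc m), S)) ((\<lambda>(lam, S). (R (Suc m) lam, S)) a) = a"
    using R_split[of lam "Suc m"] cnt by simp
  have e0: "lam = R (Suc m) lam + replicate_mset c (Suc m)" using R_split[of lam "Suc m"] unfolding cnt .
  have "size lam = size (R (Suc m) lam + replicate_mset c (Suc m))" using e0 by (rule arg_cong)
  hence sz: "size lam = size (R (Suc m) lam) + c" by simp
  have lamP: "\<forall>x\<in>#lam. 0 < x \<and> x \<le> Suc m" "size lam \<le> b" "S \<subseteq> set_mset lam" "Suc m \<notin> S"
    using a unfolding overpartitions_def by auto
  have p1: "\<forall>x\<in>#R (Suc m) lam. 0 < x \<and> x \<le> m"
    using lamP(1) unfolding R_def by (auto simp: le_Suc_eq)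
  have p3: "S \<subseteq> set_mset (R (Suc m) lam)"
    using lamP(3,4) unfolding R_def by auto
  show "(\<lambda>(lam, S). (R (Suc m) lam, S)) a \<in> OP m (b - c)"
    using p1 p3 sz lamP(2) unfolding overpartitions_def by simp
  have e: "lam = R (Suc m) lam + replicate_mset c (Suc m)" using R_split[of lam "Suc m"] unfolding cnt .
  have "sum_mset lam = sum_mset (R (Suc m) lam + replicate_mset c (Suc m))" using e by (rule arg_cong)
  hence sm: "sum_mset lam = sum_mset (R (Suc m) lam) + c * Suc m" by simp
  show "Q (c * Suc m) * wgt ((\<lambda>(lam, S). (R (Suc m) lam, S)) a) = wgt a"
    unfolding wgt_def monom_split by (simp add: sm Q_add algebra_simps)
next
  fix y assume y: "y \<in> OP m (b - c)"
  obtain mu S where [simp]: "y = (mu, S)" by fastforce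
  have nm: "Suc m \<notin># mu" using y unfolding overpartitions_def by auto
  hence "R (Suc m) mu = mu" unfolding R_def by (auto simp: multiset_eq_iff count_eq_zero_iff)
  thus "(\<lambda>(lam, S). (R (Suc m) lam, S)) ((\<lambda>(mu, S). (mu + replicate_mset c (Suc m), S)) y) = y"
    by (simp add: R_def)
  have yP: "\<forall>x\<in>#mu. 0 < x \<and> x \<le> m" "size mu \<le> b - c" "S \<subseteq> set_mset mu"
    using y unfolding overpartitions_def by auto
  have q1: "\<forall>x\<in>#mu + replicate_mset c (Suc m). 0 < x \<and> x \<le> Suc m" using yP(1) by auto
  have q2: "size (mu + replicate_mset c (Suc m)) \<le> b" using yP(2) assms by simp
  have q3: "S \<subseteq> set_mset (mu + replicate_mset c (Suc m))" using yP(3) by auto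
  have q4: "count (mu + replicate_mset c (Suc m)) (Suc m) = c" using nm by (simp add: count_eq_zero_iff)
  have q5: "Suc m \<notin> S" using yP(3) nm by auto
  show "(\<lambda>(mu, S). (mu + replicate_mset c (Suc m), S)) y
        \<in> {x \<in> OP (Suc m) b. count (fst x) (Suc m) = c} - {x. Suc m \<in> snd x}"
    using q1 q2 q3 q4 q5 unfolding overpartitions_def by simp
qed

lemma sum_F1:
  assumes "c \<le> b" "0 < c"
  shows "(\<Sum>x\<in>{x \<in> OP (Suc m) b. count (fst x) (Suc m) = c} \<inter> {x. Suc m \<in> snd x}. wgt x)
       = (\<Sum>y\<in>OP m (b - c). T * Q (c * Suc m) * wgt y)"
proof (rule sum.reindex_bij_witness[where j = "\<lambda>(lam, S). (R (Suc m) lam, S - {Suc m})"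
      and i = "\<lambda>(mu, S). (mu + replicate_mset c (Suc m), insert (Suc m) S)"])
  fix a assume a: "a \<in> {x \<in> OP (Suc m) b. count (fst x) (Suc m) = c} \<inter> {x. Suc m \<in> snd x}"
  obtain lam S where [simp]: "a = (lam, S)" by fastforce
  from a have cnt: "count lam (Suc m) = c" and inS: "Suc m \<in> S" by auto
  show "(\<lambda>(mu, S). (mu + replicate_mset c (Suc m), insert (Suc m) S)) ((\<lambda>(lam, S). (R (Suc m) lam, S - {Suc m})) a) = a"
    using R_split[of lam "Suc m"] cnt inS by (simp add: insert_absorb)
  have e0: "lam = R (Suc m) lam + replicate_mset c (Suc m)" using R_split[of lam "Suc m"] unfolding cnt .
  have "size lam = size (R (Suc m) lam + replicate_mset c (Suc m))" using e0 by (rule arg_cong)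
  hence sz: "size lam = size (R (Suc m) lam) + c" by simp
  have lamP: "\<forall>x\<in>#lam. 0 < x \<and> x \<le> Suc m" "size lam \<le> b" "S \<subseteq> set_mset lam"
    using a unfolding overpartitions_def by auto
  have p1: "\<forall>x\<in>#R (Suc m) lam. 0 < x \<and> x \<le> m"
    using lamP(1) unfolding R_def by (auto simp: le_Suc_eq)
  have p3: "S - {Suc m} \<subseteq> set_mset (R (Suc m) lam)"
    using lamP(3) unfolding R_def by auto
  show "(\<lambda>(lam, S). (R (Suc m) lam, S - {Suc m})) a \<in> OP m (b - c)"
    using p1 p3 sz lamP(2) unfolding overpartitions_def by simp
  have e: "lam = R (Suc m) lam + replicate_mset c (Suc m)" using R_split[of lam "Suc m"] unfolding cnt .
  have "sum_mset lam = sum_mset (R (Suc m) lam + replicate_mset c (Suc m))" using e by (rule arg_cong)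
  hence sm: "sum_mset lam = sum_mset (R (Suc m) lam) + c * Suc m" by simp
  have fS: "finite S" using a unfolding overpartitions_def by (auto intro: finite_subset)
  have cd: "card S = Suc (card (S - {Suc m}))" using card_Suc_Diff1[OF fS inS] by simp
  show "T * Q (c * Suc m) * wgt ((\<lambda>(lam, S). (R (Suc m) lam, S - {Suc m})) a) = wgt a"
    unfolding wgt_def monom_split by (simp add: sm cd Q_add algebra_simps)
next
  fix y assume y: "y \<in> OP m (b - c)"
  obtain mu S where [simp]: "y = (mu, S)" by fastforce
  have nm: "Suc m \<notin># mu" using y unfolding overpartitions_def by auto
  have nS: "Suc m \<notin> S" using y nm unfolding overpartitions_def by auto
  from nm have "R (Suc m) mu = mu" unfolding R_def by (auto simp: multiset_eq_iff count_eq_zero_iff)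
  thus "(\<lambda>(lam, S). (R (Suc m) lam, S - {Suc m})) ((\<lambda>(mu, S). (mu + replicate_mset c (Suc m), insert (Suc m) S)) y) = y"
    using nS by (simp add: R_def)
  have yP: "\<forall>x\<in>#mu. 0 < x \<and> x \<le> m" "size mu \<le> b - c" "S \<subseteq> set_mset mu"
    using y unfolding overpartitions_def by auto
  have q1: "\<forall>x\<in>#mu + replicate_mset c (Suc m). 0 < x \<and> x \<le> Suc m" using yP(1) by auto
  have q2: "size (mu + replicate_mset c (Suc m)) \<le> b" using yP(2) assms by simp
  have q3: "insert (Suc m) S \<subseteq> set_mset (mu + replicate_mset c (Suc m))" using yP(3) assms by auto
  have q4: "count (mu + replicate_mset c (Suc m)) (Suc m) = c" using nm by (simp add: count_eq_zero_iff)
  show "(\<lambda>(mu, S). (mu + replicate_mset c (Suc m), insert (Suc m) S)) y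
        \<in> {x \<in> OP (Suc m) b. count (fst x) (Suc m) = c} \<inter> {x. Suc m \<in> snd x}"
    using q1 q2 q3 q4 unfolding overpartitions_def by simp
qed

definition wt :: "nat \<Rightarrow> nat \<Rightarrow> int poly poly" where
  "wt M c = (if c = 0 then 1 else (1 + T) * Q (c * M))"

definition Gz :: "nat \<Rightarrow> nat \<Rightarrow> int poly poly" where
  "Gz m b = over_gauss (m + b) b"

lemma Gz_0: "Gz 0 b = 1"
  unfolding Gz_def using over_gauss_wgt[of 0 b] by (simp add: OP_0 wgt_def)

lemma Gz_Suc: "Gz (Suc m) b = (\<Sum>c\<le>b. wt (Suc m) c * Gz m (b - c))"
proof -
  have "Gz (Suc m) b = (\<Sum>x\<in>OP (Suc m) b. wgt x)" unfolding Gz_def by (rule over_gauss_wgt)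
  also have "\<dots> = (\<Sum>c\<le>b. \<Sum>x\<in>{x \<in> OP (Suc m) b. count (fst x) (Suc m) = c}. wgt x)"
  proof (rule sum.group[symmetric])
    show "(\<lambda>x. count (fst x) (Suc m)) ` OP (Suc m) b \<subseteq> {..b}"
    proof
      fix y assume "y \<in> (\<lambda>x. count (fst x) (Suc m)) ` OP (Suc m) b"
      then obtain x where x: "x \<in> OP (Suc m) b" "y = count (fst x) (Suc m)" by blast
      have "size (fst x) \<le> b" using x(1) unfolding overpartitions_def by auto
      thus "y \<in> {..b}" using x(2) count_le_size[of "fst x" "Suc m"] by simp
    qed
  qed (auto simp: finite_OP)
  also have "\<dots> = (\<Sum>c\<le>b. wt (Suc m) c * Gz m (b - c))"
  proof (rule sum.cong[OF refl])
    fix c assume c: "c \<in> {..b}"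
    show "(\<Sum>x\<in>{x \<in> OP (Suc m) b. count (fst x) (Suc m) = c}. wgt x) = wt (Suc m) c * Gz m (b - c)"
    proof (cases "c = 0")
      case True thus ?thesis by (simp add: fiber0 wt_def Gz_def over_gauss_wgt)
    next
      case False
      have fin: "finite {x \<in> OP (Suc m) b. count (fst x) (Suc m) = c}" by (simp add: finite_OP)
      have cb: "c \<le> b" using c by simp
      have "(\<Sum>x\<in>{x \<in> OP (Suc m) b. count (fst x) (Suc m) = c}. wgt x)
          = (\<Sum>y\<in>OP m (b - c). T * Q (c * Suc m) * wgt y) + (\<Sum>y\<in>OP m (b - c). Q (c * Suc m) * wgt y)"
        unfolding sum.Int_Diff[OF fin, of _ "{x. Suc m \<in> snd x}"]
        using sum_F0[OF cb, of m] sum_F1[OF cb, of m] False by simp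
      also have "\<dots> = T * Q (c * Suc m) * Gz m (b - c) + Q (c * Suc m) * Gz m (b - c)"
        unfolding Gz_def over_gauss_wgt sum_distrib_left[symmetric] ..
      also have "\<dots> = wt (Suc m) c * Gz m (b - c)"
        unfolding wt_def using False by (simp add: distrib_right)
      finally show ?thesis .
    qed
  qed
  finally show ?thesis .
qed



definition g :: "nat \<Rightarrow> int \<Rightarrow> int poly poly" where
  "g m h = (if h < 0 then 0 else Gz m (nat h))"

definition W :: "nat \<Rightarrow> int \<Rightarrow> int poly poly" where
  "W M x = (if x < 0 then 0 else wt M (nat x))"

lemma nn2_wt: "nonneg_coeffs2 (wt M c)"
  unfolding wt_def by (auto intro!: nn2_mult nn2_add nn2_1 nn2_T nn2_Q)

lemma nn2_W: "nonneg_coeffs2 (W M x)"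
  unfolding W_def by (auto intro!: nn2_wt nn2_0)

lemma nn2_Gz: "nonneg_coeffs2 (Gz m b)"
  unfolding Gz_def over_gauss_wgt wgt_def by (auto intro!: nn2_sum nn2_monom)

lemma nn2_g: "nonneg_coeffs2 (g m h)"
  unfolding g_def by (auto intro!: nn2_Gz nn2_0)

lemma rec_base:
  assumes "0 \<le> x"
  shows "g (Suc m) x = (\<Sum>i\<in>{0..x}. g m i * W (Suc m) (x - i))"
proof -
  have "g (Suc m) x = (\<Sum>c\<le>nat x. wt (Suc m) c * Gz m (nat x - c))"
    using assms by (simp add: g_def Gz_Suc)
  also have "\<dots> = (\<Sum>i\<in>{0..x}. g m i * W (Suc m) (x - i))"
  proof (rule sum.reindex_bij_witness[where j = "\<lambda>c. x - int c" and i = "\<lambda>i. nat (x - i)"])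
    fix c assume "c \<in> {..nat x}"
    thus "nat (x - (x - int c)) = c" "x - int c \<in> {0..x}" using assms by auto
    have "nat (x - int c) = nat x - c" using \<open>c \<in> {..nat x}\<close> by auto
    moreover have "nat (x - (x - int c)) = c" by simp
    ultimately show "g m (x - int c) * W (Suc m) (x - (x - int c)) = wt (Suc m) c * Gz m (nat x - c)"
      using \<open>c \<in> {..nat x}\<close> assms by (simp add: g_def W_def mult.commute)
  next
    fix i assume "i \<in> {0..x}"
    thus "x - int (nat (x - i)) = i" "nat (x - i) \<in> {..nat x}" by auto
  qed
  finally show ?thesis .
qed

lemma rec_i:
  assumes "finite I" "{0..x} \<subseteq> I"
  shows "g (Suc m) x = (\<Sum>i\<in>I. g m i * W (Suc m) (x - i))"
proof (cases "0 \<le> x")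
  case True
  have "g (Suc m) x = (\<Sum>i\<in>{0..x}. g m i * W (Suc m) (x - i))" by (rule rec_base[OF True])
  also have "\<dots> = (\<Sum>i\<in>I. g m i * W (Suc m) (x - i))"
    by (rule sum.mono_neutral_left[OF assms(1,2)]) (auto simp: g_def W_def)
  finally show ?thesis .
next
  case False
  hence "g (Suc m) x = 0" by (simp add: g_def)
  also have "\<dots> = (\<Sum>i\<in>I. g m i * W (Suc m) (x - i))"
    using False by (intro sum.neutral[symmetric]) (auto simp: g_def W_def)
  finally show ?thesis .
qed

lemma rec_c:
  assumes "x \<le> N"
  shows "g (Suc m) x = (\<Sum>c\<in>{0..N}. W (Suc m) c * g m (x - c))"
proof -
  have "g (Suc m) x = (\<Sum>i\<in>{x-N..x}. g m i * W (Suc m) (x - i))"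
    using assms by (intro rec_i) auto
  also have "\<dots> = (\<Sum>c\<in>{0..N}. W (Suc m) c * g m (x - c))"
    by (rule sum.reindex_bij_witness[where j = "\<lambda>i. x - i" and i = "\<lambda>c. x - c"]) (auto simp: mult.commute)
  finally show ?thesis .
qed

lemma rec_shift:
  assumes "0 \<le> N" "x \<le> N - 1"
  shows "g (Suc m) x = (\<Sum>j\<in>{0..N}. g m (j - 1) * W (Suc m) (x + 1 - j))"
proof -
  have "g (Suc m) x = (\<Sum>i\<in>{-1..N-1}. g m i * W (Suc m) (x - i))"
    using assms by (intro rec_i) auto
  also have "\<dots> = (\<Sum>j\<in>{0..N}. g m (j - 1) * W (Suc m) (x + 1 - j))"
    by (rule sum.reindex_bij_witness[where j = "\<lambda>i. i + 1" and i = "\<lambda>j. j - 1"]) (auto simp: algebra_simps)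
  finally show ?thesis .
qed




lemma W_pos: "0 < x \<Longrightarrow> W M x = (1 + T) * Q (nat x * M)"
  unfolding W_def wt_def by auto

lemma W_0: "W M 0 = 1" unfolding W_def wt_def by auto

lemma GW:
  assumes "i < j" "h \<le> l"
  shows "nonneg_coeffs2 (W M (h - i) * W M (l + 1 - j) - W M (h - j) * W M (l + 1 - i))"
proof -
  consider "h < j" | "h = j" | "j < h" by linarith
  thus ?thesis
  proof cases
    case 1
    hence "W M (h - j) = 0" by (simp add: W_def)
    thus ?thesis by (simp add: nn2_mult nn2_W)
  next
    case 2
    have e: "nat (h - i) * M + nat (l + 1 - j) * M = nat (l + 1 - i) * M"
      using assms 2 by (simp add: add_mult_distrib[symmetric] nat_add_distrib[symmetric])
    have "W M (h - i) * W M (l + 1 - j) - W M (h - j) * W M (l + 1 - i)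
        = (1 + T) * (1 + T) * (Q (nat (h - i) * M) * Q (nat (l + 1 - j) * M)) - (1 + T) * Q (nat (l + 1 - i) * M)"
      using assms 2 by (simp add: W_pos W_0 algebra_simps)
    also have "\<dots> = (T + T * T) * Q (nat (l + 1 - i) * M)"
      unfolding Q_add[symmetric] e by (simp add: algebra_simps)
    finally show ?thesis by (simp add: nn2_mult nn2_add nn2_T nn2_Q)
  next
    case 3
    have "nat (h - i) + nat (l + 1 - j) = nat ((h - i) + (l + 1 - j))" using assms 3 by (simp add: nat_add_distrib)
    also have "\<dots> = nat ((h - j) + (l + 1 - i))" by (rule arg_cong[where f=nat]) simp
    also have "\<dots> = nat (h - j) + nat (l + 1 - i)" using assms 3 by (simp add: nat_add_distrib)
    finally have e0: "nat (h - i) + nat (l + 1 - j) = nat (h - j) + nat (l + 1 - i)" .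
    have e: "nat (h - i) * M + nat (l + 1 - j) * M = nat (h - j) * M + nat (l + 1 - i) * M"
      by (simp add: add_mult_distrib[symmetric] e0)
    have "W M (h - i) * W M (l + 1 - j) - W M (h - j) * W M (l + 1 - i)
        = (1 + T) * (1 + T) * (Q (nat (h - i) * M) * Q (nat (l + 1 - j) * M)
                               - Q (nat (h - j) * M) * Q (nat (l + 1 - i) * M))"
      using assms 3 by (simp add: W_pos algebra_simps)
    also have "\<dots> = 0"
      unfolding Q_add[symmetric] e by simp
    finally show ?thesis by (simp add: nn2_0)
  qed
qed

lemma nn2_half: "nonneg_coeffs2 (p + p) \<Longrightarrow> nonneg_coeffs2 p"
  unfolding nonneg_coeffs2_def by (metis add_nonneg_nonneg coeff_add linorder_not_le add_neg_neg)

lemma g0: "g 0 x = (if x < 0 then 0 else 1)"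
  unfolding g_def by (simp add: Gz_0)

lemma term_nn:
  assumes IH: "\<And>h l. h \<le> l + 1 \<Longrightarrow> nonneg_coeffs2 (g m h * g m l - g m (h - 1) * g m (l + 1))"
    and hl: "h \<le> l"
  shows "nonneg_coeffs2 ((g m i * g m (j - 1) - g m j * g m (i - 1)) *
           (W M (h - i) * W M (l + 1 - j) - W M (h - j) * W M (l + 1 - i)))"
proof -
  consider "i < j" | "i = j" | "j < i" by linarith
  thus ?thesis
  proof cases
    case 1
    have "nonneg_coeffs2 (g m i * g m (j - 1) - g m (i - 1) * g m (j - 1 + 1))"
      using 1 by (intro IH) simp
    hence a: "nonneg_coeffs2 (g m i * g m (j - 1) - g m j * g m (i - 1))" by (simp add: mult.commute)
    show ?thesis by (rule nn2_mult[OF a GW[OF 1 hl]])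
  next
    case 2 thus ?thesis by (simp add: nn2_0)
  next
    case 3
    have "nonneg_coeffs2 (g m j * g m (i - 1) - g m (j - 1) * g m (i - 1 + 1))"
      using 3 by (intro IH) simp
    hence a: "nonneg_coeffs2 (g m j * g m (i - 1) - g m i * g m (j - 1))" by (simp add: mult.commute)
    have "(g m i * g m (j - 1) - g m j * g m (i - 1)) *
           (W M (h - i) * W M (l + 1 - j) - W M (h - j) * W M (l + 1 - i))
        = (g m j * g m (i - 1) - g m i * g m (j - 1)) *
           (W M (h - j) * W M (l + 1 - i) - W M (h - i) * W M (l + 1 - j))"
      by (simp add: algebra_simps)
    thus ?thesis using nn2_mult[OF a GW[OF 3 hl]] by simp
  qed
qed

lemma LC: "h \<le> l + 1 \<Longrightarrow> nonneg_coeffs2 (g m h * g m l - g m (h - 1) * g m (l + 1))"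
proof (induction m arbitrary: h l)
  case 0
  thus ?case by (auto simp: g0 nn2_0 nn2_1)
next
  case (Suc m)
  note IH = Suc.IH
  show ?case
  proof (cases "h = l + 1")
    case True thus ?thesis by (simp add: nn2_0 mult.commute)
  next
    case False
    hence hl: "h \<le> l" using Suc.prems by simp
    define N where "N = \<bar>l\<bar> + 1"
    define I where "I = {0..N}"
    define v where "v = g m"
    define w where "w = W (Suc m)"
    define G where "G i j = w (h - i) * w (l + 1 - j) - w (h - j) * w (l + 1 - i)" for i j
    have fI: "finite I" unfolding I_def by simp
    have uh: "g (Suc m) h = (\<Sum>i\<in>I. v i * w (h - i))"
      unfolding v_def w_def I_def using hl N_def by (intro rec_i) auto
    have ul1: "g (Suc m) (l + 1) = (\<Sum>i\<in>I. v i * w (l + 1 - i))"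
      unfolding v_def w_def I_def using hl N_def by (intro rec_i) auto
    have uh1: "g (Suc m) (h - 1) = (\<Sum>j\<in>I. v (j - 1) * w (h - j))"
      unfolding v_def w_def I_def using hl N_def rec_shift[of N "h - 1" m] by simp
    have ul: "g (Suc m) l = (\<Sum>j\<in>I. v (j - 1) * w (l + 1 - j))"
      unfolding v_def w_def I_def using hl N_def rec_shift[of N l m] by simp
    define S where "S = (\<Sum>i\<in>I. \<Sum>j\<in>I. v i * v (j - 1) * G i j)"
    have e1: "g (Suc m) h * g (Suc m) l - g (Suc m) (h - 1) * g (Suc m) (l + 1) = S"
    proof -
      have "g (Suc m) h * g (Suc m) l = (\<Sum>i\<in>I. \<Sum>j\<in>I. v i * w (h - i) * (v (j - 1) * w (l + 1 - j)))"
        unfolding uh ul sum_product ..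
      moreover have "g (Suc m) (h - 1) * g (Suc m) (l + 1) = (\<Sum>j\<in>I. \<Sum>i\<in>I. v (j - 1) * w (h - j) * (v i * w (l + 1 - i)))"
        unfolding uh1 ul1 sum_product ..
      moreover have "\<dots> = (\<Sum>i\<in>I. \<Sum>j\<in>I. v (j - 1) * w (h - j) * (v i * w (l + 1 - i)))"
        by (rule sum.swap)
      ultimately show ?thesis
        unfolding S_def G_def by (simp add: sum_subtractf[symmetric] algebra_simps)
    qed
    have e2: "S = (\<Sum>i\<in>I. \<Sum>j\<in>I. - (v j * v (i - 1)) * G i j)"
    proof -
      have "S = (\<Sum>j\<in>I. \<Sum>i\<in>I. v i * v (j - 1) * G i j)" unfolding S_def by (rule sum.swap)
      also have "\<dots> = (\<Sum>i\<in>I. \<Sum>j\<in>I. - (v j * v (i - 1)) * G i j)"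
        unfolding G_def by (simp add: algebra_simps)
      finally show ?thesis .
    qed
    have "S + S = (\<Sum>i\<in>I. \<Sum>j\<in>I. (v i * v (j - 1) - v j * v (i - 1)) * G i j)"
      by (subst (2) e2) (simp add: S_def sum.distrib[symmetric] algebra_simps)
    hence "nonneg_coeffs2 (S + S)"
      unfolding v_def G_def w_def
      using term_nn[OF IH hl] by (auto intro!: nn2_sum)
    hence "nonneg_coeffs2 S" by (rule nn2_half)
    thus ?thesis using e1 by simp
  qed
qed


lemma MAIN: "k \<le> l + 1 \<Longrightarrow> nonneg_coeffs2 (g (b + d) k * g b l - g (b + d) (k - 1) * g b (l + 1))"
proof (induction d arbitrary: k)
  case 0 thus ?case using LC by simp
next
  case (Suc d)
  define N where "N = \<bar>k\<bar>"
  have r1: "g (Suc (b + d)) k = (\<Sum>c\<in>{0..N}. W (Suc (b + d)) c * g (b + d) (k - c))"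
    unfolding N_def by (rule rec_c) simp
  have r2: "g (Suc (b + d)) (k - 1) = (\<Sum>c\<in>{0..N}. W (Suc (b + d)) c * g (b + d) (k - 1 - c))"
    unfolding N_def by (rule rec_c) simp
  have "g (b + Suc d) k * g b l - g (b + Suc d) (k - 1) * g b (l + 1)
      = (\<Sum>c\<in>{0..N}. W (Suc (b + d)) c *
           (g (b + d) (k - c) * g b l - g (b + d) (k - c - 1) * g b (l + 1)))"
    unfolding add_Suc_right r1 r2 sum_distrib_right sum_subtractf[symmetric]
    by (rule sum.cong) (simp_all add: algebra_simps)
  moreover have "nonneg_coeffs2 \<dots>"
    using Suc.prems by (auto intro!: nn2_sum nn2_mult nn2_W Suc.IH)
  ultimately show ?case by simp
qed

theorem theorem6p2:
  fixes n k l :: nat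
  assumes "0 < k" and "k \<le> l" and "l < n"
  shows "nonneg_coeffs2
           (over_gauss n k * over_gauss n l
            - over_gauss (n - 1) (k - 1) * over_gauss (n + 1) (l + 1))"
proof -
  have o1: "over_gauss n k = g (n - l + (l - k)) (int k)"
    using assms unfolding g_def Gz_def by simp
  have o2: "over_gauss (n - 1) (k - 1) = g (n - l + (l - k)) (int k - 1)"
    using assms unfolding g_def Gz_def by (simp add: nat_diff_distrib)
  have o3: "over_gauss n l = g (n - l) (int l)"
    using assms unfolding g_def Gz_def by simp
  have o4: "over_gauss (n + 1) (l + 1) = g (n - l) (int l + 1)"
    using assms unfolding g_def Gz_def by (simp add: nat_add_distrib)
  show ?thesis unfolding o1 o2 o3 o4 using assms by (intro MAIN) simp
qed


end
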